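(* For every pair of integers $r$ and $k$ with $r\ge 2$, $k$ positive, $r+k\equiv 1\pmod 2$ and $k\le r$, there exist infinitely many triples $(G,P,d)$ such that (1) $G$ is a graph with $\chi(G)\le r$, (2) $P\subset V(G)$ and $|\mathcal{D}_G(P,2)|=3(r+k-1)$, (3) $d\colon P\to[r+k]$ is a precoloring of $P$ in $G$, and (4) $d$ cannot be extended to a $\frac{3r+k+1}{2}$-coloring of $G$.
   Context: For a graph $G$, $P\subset V(G)$ and a positive integer $k$, $\mathcal{D}_G(P,k)=\{\{x,y\}\subset P: x\ne y,\ d_G(x,y)\le k\}$, where $d_G$ is the distance in $G$. $[m]=\{1,\dots,m\}$. A precoloring of $P$ in $G$ is a proper coloring of $G[P]$; an $m$-coloring of $G$ is a proper coloring using at most $m$ colors; $d$ is extended by a coloring $f$ of $G$ if $f(v)=d(v)$ for all $v\in P$. *)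

theory Defs
  imports Main "HOL-Library.Extended_Nat"
begin

definition graph :: "nat set \<Rightarrow> nat set set \<Rightarrow> bool" where
  "graph V E \<longleftrightarrow> finite V \<and> (\<forall>e\<in>E. e \<subseteq> V \<and> card e = 2)"

definition adj :: "nat set set \<Rightarrow> nat \<Rightarrow> nat \<Rightarrow> bool" where
  "adj E x y \<longleftrightarrow> {x, y} \<in> E"

text \<open>A walk of length n from x to y: a vertex list with n+1 entries, consecutive entries adjacent.\<close>
definition walk :: "nat set \<Rightarrow> nat set set \<Rightarrow> nat list \<Rightarrow> bool" where
  "walk V E xs \<longleftrightarrow> xs \<noteq> [] \<and> set xs \<subseteq> V \<and> (\<forall>i. Suc i < length xs \<longrightarrow> adj E (xs ! i) (xs ! Suc i))"

text \<open>Graph distance (infinite if no walk exists).\<close>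
definition gdist :: "nat set \<Rightarrow> nat set set \<Rightarrow> nat \<Rightarrow> nat \<Rightarrow> enat" where
  "gdist V E x y = (INF n \<in> {n. \<exists>xs. walk V E xs \<and> hd xs = x \<and> last xs = y \<and> length xs = Suc n}. enat n)"

definition Dpairs :: "nat set \<Rightarrow> nat set set \<Rightarrow> nat set \<Rightarrow> nat \<Rightarrow> nat set set" where
  "Dpairs V E P k = {{x, y} | x y. x \<in> P \<and> y \<in> P \<and> x \<noteq> y \<and> gdist V E x y \<le> enat k}"

definition proper_on :: "nat set set \<Rightarrow> nat set \<Rightarrow> (nat \<Rightarrow> nat) \<Rightarrow> bool" where
  "proper_on E S f \<longleftrightarrow> (\<forall>x\<in>S. \<forall>y\<in>S. adj E x y \<longrightarrow> f x \<noteq> f y)"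

definition m_coloring :: "nat set \<Rightarrow> nat set set \<Rightarrow> nat \<Rightarrow> (nat \<Rightarrow> nat) \<Rightarrow> bool" where
  "m_coloring V E m f \<longleftrightarrow> proper_on E V f \<and> card (f ` V) \<le> m"

definition chromatic_le :: "nat set \<Rightarrow> nat set set \<Rightarrow> nat \<Rightarrow> bool" where
  "chromatic_le V E r \<longleftrightarrow> (\<exists>f. m_coloring V E r f)"

definition precoloring :: "nat set set \<Rightarrow> nat set \<Rightarrow> nat \<Rightarrow> (nat \<Rightarrow> nat) \<Rightarrow> bool" where
  "precoloring E P m d \<longleftrightarrow> proper_on E P d \<and> d ` P \<subseteq> {1..m}"

definition extends :: "nat set \<Rightarrow> (nat \<Rightarrow> nat) \<Rightarrow> (nat \<Rightarrow> nat) \<Rightarrow> bool" where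
  "extends P d f \<longleftrightarrow> (\<forall>v\<in>P. f v = d v)"

type_synonym triple = "(nat set \<times> nat set set) \<times> nat set \<times> (nat \<Rightarrow> nat)"

definition triple_iso :: "triple \<Rightarrow> triple \<Rightarrow> bool" where
  "triple_iso t t' \<longleftrightarrow> (case t of ((V, E), P, d) \<Rightarrow> case t' of ((V', E'), P', d') \<Rightarrow>
     (\<exists>h. bij_betw h V V' \<and> (\<forall>x\<in>V. \<forall>y\<in>V. adj E x y \<longleftrightarrow> adj E' (h x) (h y))
          \<and> h ` P = P' \<and> (\<forall>v\<in>P. d' (h v) = d v)))"

end

theory Submission
  imports Defs
begin


lemma gdist_le2:
  assumes "x \<in> V" "y \<in> V"
  shows "gdist V E x y \<le> enat 2 \<longleftrightarrow> x = y \<or> adj E x y \<or> (\<exists>w\<in>V. adj E x w \<and> adj E w y)"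
proof
  let ?S = "{n. \<exists>xs. walk V E xs \<and> hd xs = x \<and> last xs = y \<and> length xs = Suc n}"
  assume "gdist V E x y \<le> enat 2"
  hence "(INF n\<in>?S. enat n) \<le> enat 2" by (simp add: gdist_def)
  hence "\<forall>z>enat 2. \<exists>i\<in>?S. enat i < z" by (simp add: INF_le_iff)
  hence "\<exists>i\<in>?S. enat i < enat 3" by (erule_tac x="enat 3" in allE) simp
  then obtain i where i: "i \<in> ?S" "i < 3" by auto
  then obtain xs where xs: "walk V E xs" "hd xs = x" "last xs = y" "length xs = Suc i" by auto
  have "i = 0 \<or> i = 1 \<or> i = 2" using i(2) by linarith
  thus "x = y \<or> adj E x y \<or> (\<exists>w\<in>V. adj E x w \<and> adj E w y)"
  proof (elim disjE)
    assume "i = 0"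
    then obtain a where "xs = [a]" using xs(4) by (auto simp: length_Suc_conv)
    thus ?thesis using xs by simp
  next
    assume "i = 1"
    then obtain a b where ab: "xs = [a,b]" using xs(4)
      by (auto simp: length_Suc_conv)
    have "adj E (xs!0) (xs!1)" using xs(1) ab unfolding walk_def by simp
    thus ?thesis using xs ab by simp
  next
    assume "i = 2"
    then obtain a b c where ab: "xs = [a,b,c]" using xs(4)
      by (auto simp: length_Suc_conv numeral_2_eq_2)
    have "adj E (xs!0) (xs!1)" "adj E (xs!1) (xs!2)" using xs(1) ab unfolding walk_def by (auto simp: less_Suc_eq)
    moreover have "b \<in> V" using xs(1) ab unfolding walk_def by simp
    ultimately show ?thesis using xs ab by auto
  qed
next
  let ?S = "{n. \<exists>xs. walk V E xs \<and> hd xs = x \<and> last xs = y \<and> length xs = Suc n}"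
  assume h: "x = y \<or> adj E x y \<or> (\<exists>w\<in>V. adj E x w \<and> adj E w y)"
  have "\<exists>n\<in>?S. n \<le> 2"
  proof -
    { assume "x = y"
      have "walk V E [x]" using assms by (simp add: walk_def)
      hence "0 \<in> ?S" using \<open>x = y\<close> by force
      hence ?thesis by blast }
    moreover
    { assume a: "adj E x y"
      have "walk V E [x,y]" using assms a unfolding walk_def by (simp add: less_Suc_eq)
      hence "1 \<in> ?S" by force
      hence ?thesis by force }
    moreover
    { assume "\<exists>w\<in>V. adj E x w \<and> adj E w y"
      then obtain w where w: "w \<in> V" "adj E x w" "adj E w y" by auto
      have "walk V E [x,w,y]" using assms w unfolding walk_def
        by (auto simp: less_Suc_eq)
      hence "2 \<in> ?S" by force
      hence ?thesis by force }
    ultimately show ?thesis using h by blast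
  qed
  then obtain n where n: "n \<in> ?S" "n \<le> 2" by blast
  hence "(INF n\<in>?S. enat n) \<le> enat n" by (intro INF_lower)
  also have "\<dots> \<le> enat 2" using n by simp
  finally show "gdist V E x y \<le> enat 2" by (simp add: gdist_def)
qed




definition Wv :: "nat \<Rightarrow> nat \<Rightarrow> nat \<Rightarrow> nat" where "Wv n j c = 8*(j*(n+1)+c)+4"

lemma mod8_4: "(8*t+4::nat) mod 8 = 4" by simp

lemma Wv_mod8[simp]: "Wv n j c mod 8 = 4"
  unfolding Wv_def by (rule mod8_4)

lemma Wv_div8: "Wv n j c div 8 = j*(n+1)+c"
  unfolding Wv_def by simp

lemma divaux: "c \<le> n \<Longrightarrow> (j*(n+1)+c) div (n+1) = (j::nat)"
proof -
  assume "c \<le> n"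
  have "(c + j*(n+1)) div (n+1) = j + c div (n+1)" by (rule div_mult_self1) simp
  also have "c div (n+1) = 0" using \<open>c \<le> n\<close> by simp
  finally show ?thesis by (simp add: add.commute)
qed

lemma modaux: "c \<le> n \<Longrightarrow> (j*(n+1)+c) mod (n+1) = (c::nat)"
proof -
  assume "c \<le> n"
  have "(c + j*(n+1)) mod (n+1) = c mod (n+1)" by (rule mod_mult_self1)
  also have "c mod (n+1) = c" using \<open>c \<le> n\<close> by simp
  finally show ?thesis by (simp add: add.commute)
qed

lemma Wv_j: "c \<le> n \<Longrightarrow> (Wv n j c div 8) div (n+1) = j"
  unfolding Wv_div8 by (rule divaux)

lemma Wv_c: "c \<le> n \<Longrightarrow> (Wv n j c div 8) mod (n+1) = c"
  unfolding Wv_div8 by (rule modaux)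

lemma Wv_inj: "c \<le> n \<Longrightarrow> c' \<le> n \<Longrightarrow> Wv n j c = Wv n j' c' \<longleftrightarrow> j = j' \<and> c = c'"
  by (metis Wv_j Wv_c)

definition Qv :: "nat \<Rightarrow> nat" where "Qv c = 8*c+2"
definition Rv :: "nat \<Rightarrow> nat" where "Rv c = 8*c+1"
lemma Qv_mod[simp]: "Qv c mod 8 = 2" unfolding Qv_def by presburger
lemma Rv_mod[simp]: "Rv c mod 8 = 1" unfolding Rv_def by presburger
lemma Qv_div[simp]: "Qv c div 8 = c" unfolding Qv_def by presburger
lemma Rv_div[simp]: "Rv c div 8 = c" unfolding Rv_def by presburger
lemma Qv_inj[simp]: "Qv c = Qv c' \<longleftrightarrow> c = c'" unfolding Qv_def by simp
lemma Rv_inj[simp]: "Rv c = Rv c' \<longleftrightarrow> c = c'" unfolding Rv_def by simp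
lemma neq_by_mod: "(a::nat) mod 8 \<noteq> b mod 8 \<Longrightarrow> a \<noteq> b" by auto
lemma Qv_Wv[simp]: "Qv c \<noteq> Wv n j c'" "Wv n j c' \<noteq> Qv c"
  by (rule neq_by_mod; simp)+
lemma Qv_3[simp]: "Qv c \<noteq> 3" "Rv c \<noteq> 3" "Wv n j c \<noteq> 3"
  by (rule neq_by_mod; simp)+

definition HS :: "nat set" where "HS = (\<lambda>a. 8*a) ` {1..3}"
definition RS :: "nat set" where "RS = Rv ` {1..3}"
definition QS :: "nat \<Rightarrow> nat set" where "QS n = Qv ` {4..n}"
definition WS :: "nat \<Rightarrow> nat \<Rightarrow> nat set" where "WS r n = (\<lambda>(j,c). Wv n j c) ` ({..<r-1} \<times> {3..n})"
definition XS :: "nat \<Rightarrow> nat set" where "XS N = (\<lambda>i. 8*i+5) ` {..<N}"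

definition VV :: "nat \<Rightarrow> nat \<Rightarrow> nat \<Rightarrow> nat set" where
  "VV r n N = HS \<union> RS \<union> QS n \<union> {3} \<union> WS r n \<union> XS N"
definition PP :: "nat \<Rightarrow> nat set" where "PP n = HS \<union> RS \<union> QS n"

lemma HS_mod: "x \<in> HS \<Longrightarrow> x mod 8 = 0" by (auto simp: HS_def)
lemma RS_mod: "x \<in> RS \<Longrightarrow> x mod 8 = 1" by (auto simp: RS_def)
lemma QS_mod: "x \<in> QS n \<Longrightarrow> x mod 8 = 2" by (auto simp: QS_def)
lemma WS_mod: "x \<in> WS r n \<Longrightarrow> x mod 8 = 4" by (auto simp: WS_def)
lemma XS_mod: "x \<in> XS N \<Longrightarrow> x mod 8 = 5" by (auto simp: XS_def)

lemma WS_iff: "x \<in> WS r n \<longleftrightarrow> (\<exists>j c. j < r-1 \<and> 3 \<le> c \<and> c \<le> n \<and> x = Wv n j c)"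
  unfolding WS_def by force

lemma HS_WS: "x \<in> HS \<Longrightarrow> x \<in> WS r n \<Longrightarrow> False" by (auto dest!: HS_mod WS_mod)
lemma RS_WS: "x \<in> RS \<Longrightarrow> x \<in> WS r n \<Longrightarrow> False" by (auto dest!: RS_mod WS_mod)
lemma QS_WS: "x \<in> QS n' \<Longrightarrow> x \<in> WS r n \<Longrightarrow> False" by (auto dest!: QS_mod WS_mod)
lemma HS_RS: "x \<in> HS \<Longrightarrow> x \<in> RS \<Longrightarrow> False" by (auto dest!: HS_mod RS_mod)
lemma HS_QS: "x \<in> HS \<Longrightarrow> x \<in> QS n \<Longrightarrow> False" by (auto dest!: HS_mod QS_mod)
lemma RS_QS: "x \<in> RS \<Longrightarrow> x \<in> QS n \<Longrightarrow> False" by (auto dest!: RS_mod QS_mod)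
lemma XS_notP: "x \<in> XS N \<Longrightarrow> x \<in> HS \<or> x \<in> RS \<or> x \<in> QS n \<or> x \<in> WS r n \<or> x = 3 \<Longrightarrow> False"
  by (auto dest!: XS_mod HS_mod RS_mod QS_mod WS_mod)
lemma three_notin: "3 \<notin> HS" "3 \<notin> RS" "3 \<notin> QS n" "3 \<notin> WS r n" "3 \<notin> XS N"
  by (auto dest!: XS_mod HS_mod RS_mod QS_mod WS_mod)

definition ed :: "nat \<Rightarrow> nat \<Rightarrow> nat \<Rightarrow> nat \<Rightarrow> bool" where
  "ed r n x y \<longleftrightarrow>
     (x \<in> HS \<and> y \<in> WS r n) \<or> (x \<in> WS r n \<and> y \<in> HS)
   \<or> (\<exists>j c. j < r-1 \<and> 4 \<le> c \<and> c \<le> n \<and> ((x = Qv c \<and> y = Wv n j c) \<or> (y = Qv c \<and> x = Wv n j c)))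
   \<or> (x \<in> RS \<and> y = 3) \<or> (x = 3 \<and> y \<in> RS)
   \<or> (x = 3 \<and> y \<in> WS r n) \<or> (x \<in> WS r n \<and> y = 3)
   \<or> (\<exists>j c j' c'. j < r-1 \<and> j' < r-1 \<and> j \<noteq> j' \<and> 3 \<le> c \<and> c \<le> n \<and> 3 \<le> c' \<and> c' \<le> n
        \<and> x = Wv n j c \<and> y = Wv n j' c')"

definition EE :: "nat \<Rightarrow> nat \<Rightarrow> nat set set" where "EE r n = {{x,y} | x y. ed r n x y}"

lemma ed_sym: "ed r n x y \<longleftrightarrow> ed r n y x"
  unfolding ed_def by blast

lemma adj_EE: "adj (EE r n) x y \<longleftrightarrow> ed r n x y"
proof
  assume "adj (EE r n) x y"
  then obtain a b where "{x,y} = {a,b}" "ed r n a b" by (auto simp: adj_def EE_def)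
  thus "ed r n x y" by (metis doubleton_eq_iff ed_sym)
next
  assume "ed r n x y" thus "adj (EE r n) x y" by (auto simp: adj_def EE_def)
qed

lemma W_in: "j<r-1 \<Longrightarrow> 3\<le>c \<Longrightarrow> c\<le>n \<Longrightarrow> Wv n j c \<in> WS r n" by (auto simp: WS_iff)
lemma Q_in: "4 \<le> c \<Longrightarrow> c \<le> n \<Longrightarrow> Qv c \<in> QS n" unfolding QS_def by (rule imageI) simp

lemma ed_V: "ed r n x y \<Longrightarrow> x \<in> VV r n N \<and> y \<in> VV r n N"
  unfolding ed_def VV_def by (elim disjE exE conjE; simp add: W_in Q_in)

lemma ed_neq: "ed r n x y \<Longrightarrow> x \<noteq> y"
  unfolding ed_def by (elim disjE exE conjE; auto dest: HS_WS RS_WS simp: three_notin Wv_inj)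




lemma PP_mod: "x \<in> PP n \<Longrightarrow> x mod 8 \<in> {0,1,2}"
  unfolding PP_def by (auto dest: HS_mod RS_mod QS_mod)

lemma PP_notW: assumes "x \<in> PP n" shows "x \<notin> WS r m"
proof
  assume "x \<in> WS r m" hence "x mod 8 = 4" by (rule WS_mod)
  with PP_mod[OF assms] show False by simp
qed
lemma PP_not3: assumes "x \<in> PP n" shows "x \<noteq> 3"
  using PP_mod[OF assms] by auto
lemma PP_notWv: assumes "x \<in> PP n" shows "x \<noteq> Wv m j c"
proof
  assume "x = Wv m j c" hence "x mod 8 = 4" by simp
  with PP_mod[OF assms] show False by simp
qed

lemma notadj_P: assumes "x \<in> PP n" "y \<in> PP n" shows "\<not> ed r n x y"
proof -
  have "x \<notin> WS r n" "y \<notin> WS r n" "x \<noteq> 3" "y \<noteq> 3" "\<forall>j c. x \<noteq> Wv n j c" "\<forall>j c. y \<noteq> Wv n j c"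
    using assms PP_notW PP_not3 PP_notWv by blast+
  thus ?thesis unfolding ed_def by blast
qed

lemma H_facts: assumes "x \<in> HS" shows "x \<notin> WS r n" "x \<noteq> 3" "x \<notin> RS" "\<forall>c. x \<noteq> Qv c" "\<forall>j c. x \<noteq> Wv n j c"
proof -
  have m: "x mod 8 = 0" using assms by (rule HS_mod)
  show "x \<notin> WS r n" using m WS_mod by force
  show "x \<noteq> 3" using m by auto
  show "x \<notin> RS" using m RS_mod by force
  show "\<forall>c. x \<noteq> Qv c" using m by (metis Qv_mod zero_neq_numeral)
  show "\<forall>j c. x \<noteq> Wv n j c" using m by (metis Wv_mod8 zero_neq_numeral)
qed

lemma R_facts: assumes "x \<in> RS" shows "x \<notin> WS r n" "x \<noteq> 3" "x \<notin> HS" "\<forall>c. x \<noteq> Qv c" "\<forall>j c. x \<noteq> Wv n j c"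
proof -
  have m: "x mod 8 = 1" using assms by (rule RS_mod)
  show "x \<notin> WS r n" using m WS_mod by force
  show "x \<noteq> 3" using m by auto
  show "x \<notin> HS" using m HS_mod by force
  show "\<forall>c. x \<noteq> Qv c" using m by auto
  show "\<forall>j c. x \<noteq> Wv n j c" using m by auto
qed

lemma nbr_H: assumes "x \<in> HS" shows "ed r n x w \<longleftrightarrow> w \<in> WS r n"
  using H_facts[OF assms] assms unfolding ed_def by blast

lemma nbr_R: assumes "x \<in> RS" shows "ed r n x w \<longleftrightarrow> w = 3"
  using R_facts[OF assms] assms unfolding ed_def by blast

lemma nbr_Q: "4 \<le> c \<Longrightarrow> c \<le> n \<Longrightarrow> ed r n (Qv c) w \<longleftrightarrow> (\<exists>j<r-1. w = Wv n j c)"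
proof -
  assume c: "4 \<le> c" "c \<le> n"
  have q: "Qv c \<in> QS n" using c by (rule Q_in)
  have a: "Qv c \<notin> HS" "Qv c \<notin> WS r n" "Qv c \<notin> RS" "Qv c \<noteq> 3"
    using q HS_QS QS_WS RS_QS by auto
  show ?thesis
  proof
    assume "ed r n (Qv c) w"
    thus "\<exists>j<r-1. w = Wv n j c" unfolding ed_def using a by auto
  next
    assume "\<exists>j<r-1. w = Wv n j c"
    thus "ed r n (Qv c) w" unfolding ed_def using c by blast
  qed
qed




lemma PP_V: "PP n \<subseteq> VV r n N" unfolding PP_def VV_def by auto

lemma W03: "2 \<le> r \<Longrightarrow> 3 \<le> n \<Longrightarrow> Wv n 0 3 \<in> WS r n" by (rule W_in) auto

lemma WS_V: "WS r n \<subseteq> VV r n N" unfolding VV_def by auto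
lemma three_V: "3 \<in> VV r n N" unfolding VV_def by auto

lemma QS_iff: "y \<in> QS n \<longleftrightarrow> (\<exists>c. 4 \<le> c \<and> c \<le> n \<and> y = Qv c)"
  unfolding QS_def by auto

lemma nbr_cases:
  assumes "z \<in> PP n"
  obtains (H) "z \<in> HS" "\<And>w. ed r n z w \<longleftrightarrow> w \<in> WS r n"
   | (R) "z \<in> RS" "\<And>w. ed r n z w \<longleftrightarrow> w = 3"
   | (Q) c where "4 \<le> c" "c \<le> n" "z = Qv c" "z \<in> QS n" "\<And>w. ed r n z w \<longleftrightarrow> (\<exists>j<r-1. w = Wv n j c)"
proof -
  have "z \<in> HS \<or> z \<in> RS \<or> z \<in> QS n" using assms unfolding PP_def by blast
  moreover { assume "z \<in> HS" hence thesis using nbr_H H by blast }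
  moreover { assume "z \<in> RS" hence thesis using nbr_R R by blast }
  moreover { assume "z \<in> QS n"
    then obtain c where c: "4 \<le> c" "c \<le> n" "z = Qv c" unfolding QS_iff by blast
    hence thesis using Q[OF c] nbr_Q[OF c(1,2)] \<open>z \<in> QS n\<close> by blast }
  ultimately show thesis by blast
qed

lemma cn:
  assumes x: "x \<in> PP n" and y: "y \<in> PP n" and xy: "x \<noteq> y" and r: "2 \<le> r" and n: "3 \<le> n"
  shows "(\<exists>w\<in>VV r n N. ed r n x w \<and> ed r n w y) \<longleftrightarrow>
     (x \<in> HS \<and> y \<in> HS) \<or> (x \<in> RS \<and> y \<in> RS) \<or> (x \<in> HS \<and> y \<in> QS n) \<or> (x \<in> QS n \<and> y \<in> HS)"
proof -
  have eq: "(\<exists>w\<in>VV r n N. ed r n x w \<and> ed r n w y) \<longleftrightarrow> (\<exists>w\<in>VV r n N. ed r n x w \<and> ed r n y w)"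
    using ed_sym by blast
  have Hc: "\<And>z. z \<in> HS \<Longrightarrow> z \<notin> RS \<and> z \<notin> QS n" using HS_RS HS_QS by blast
  have Rc: "\<And>z. z \<in> RS \<Longrightarrow> z \<notin> HS \<and> z \<notin> QS n" using HS_RS RS_QS by blast
  have w3: "Wv n 0 3 \<in> WS r n" using r n by (rule W03)
  have 3: "3 \<notin> WS r n" "\<And>j c. Wv n j c \<noteq> 3" by (simp_all add: three_notin)
  have WV: "\<And>w. w \<in> WS r n \<Longrightarrow> w \<in> VV r n N" using WS_V by blast
  have WW: "\<And>j c. j < r-1 \<Longrightarrow> 3 \<le> c \<Longrightarrow> c \<le> n \<Longrightarrow> Wv n j c \<in> WS r n" by (rule W_in)
  have r0: "0 < r - 1" using r by simp
  have sy: "\<And>w. ed r n w y \<longleftrightarrow> ed r n y w" by (rule ed_sym)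
  show ?thesis
  proof (cases rule: nbr_cases[OF x, of r, case_names H R Q])
    case xH: H
    then show ?thesis
    proof (cases rule: nbr_cases[OF y, of r, case_names H R Q])
      case H
      then show ?thesis using xH w3 WV by (auto simp: sy)
    next
      case R
      then show ?thesis using xH 3 Rc by (auto simp: sy)
    next
      case (Q c)
      have w: "Wv n 0 c \<in> WS r n" using WW[OF r0] Q by simp
      have "ed r n x (Wv n 0 c)" using w xH(2) by blast
      moreover have "ed r n (Wv n 0 c) y" using Q(5)[of "Wv n 0 c"] r0 ed_sym[of r n "Wv n 0 c" y] by blast
      ultimately show ?thesis using xH Q w WV by blast
    qed
  next
    case xR: R
    then show ?thesis
    proof (cases rule: nbr_cases[OF y, of r, case_names H R Q])
      case H
      then show ?thesis using xR 3 Hc Rc by (auto simp: sy)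
    next
      case R
      then show ?thesis using xR three_V by (auto simp: sy)
    next
      case (Q c)
      have "\<not> ed r n y 3" using Q(5) 3(2) by metis
      hence "\<not> ed r n 3 y" using ed_sym by blast
      then show ?thesis using xR Q(4) Rc[of y] Rc[of x] by auto
    qed
  next
    case xQ: (Q c)
    then show ?thesis
    proof (cases rule: nbr_cases[OF y, of r, case_names H R Q])
      case H
      have w: "Wv n 0 c \<in> WS r n" using WW[OF r0] xQ by simp
      have "ed r n (Wv n 0 c) y" using w H(2) ed_sym[of r n "Wv n 0 c" y] by blast
      moreover have "ed r n x (Wv n 0 c)" using xQ(5) r0 by blast
      ultimately show ?thesis using xQ H w WV by blast
    next
      case R
      then show ?thesis using xQ 3 Rc by (auto simp: sy)
    next
      case (Q c')
      have "\<not> (\<exists>w. ed r n x w \<and> ed r n y w)"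
      proof
        assume "\<exists>w. ed r n x w \<and> ed r n y w"
        then obtain w where w: "ed r n x w" "ed r n y w" by blast
        obtain j where j: "w = Wv n j c" using w(1) xQ by blast
        obtain j' where j': "w = Wv n j' c'" using w(2) Q by blast
        have "c = c'" using j j' xQ Q Wv_inj by metis
        then show False using xy xQ Q by simp
      qed
      then show ?thesis using xQ Q HS_QS RS_QS sy by blast
    qed
  qed
qed




lemma gd_P:
  assumes x: "x \<in> PP n" and y: "y \<in> PP n" and xy: "x \<noteq> y" and r: "2 \<le> r" and n: "3 \<le> n"
  shows "gdist (VV r n N) (EE r n) x y \<le> enat 2 \<longleftrightarrow>
     (x \<in> HS \<and> y \<in> HS) \<or> (x \<in> RS \<and> y \<in> RS) \<or> (x \<in> HS \<and> y \<in> QS n) \<or> (x \<in> QS n \<and> y \<in> HS)"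
proof -
  have xV: "x \<in> VV r n N" and yV: "y \<in> VV r n N" using x y PP_V by blast+
  have "gdist (VV r n N) (EE r n) x y \<le> enat 2 \<longleftrightarrow> (\<exists>w\<in>VV r n N. ed r n x w \<and> ed r n w y)"
    using gdist_le2[OF xV yV, of "EE r n"] xy notadj_P[OF x y] unfolding adj_EE by blast
  also have "\<dots> \<longleftrightarrow> (x \<in> HS \<and> y \<in> HS) \<or> (x \<in> RS \<and> y \<in> RS) \<or> (x \<in> HS \<and> y \<in> QS n) \<or> (x \<in> QS n \<and> y \<in> HS)"
    by (rule cn[OF x y xy r n])
  finally show ?thesis .
qed

definition DH :: "nat set set" where "DH = {{x,y}|x y. x \<in> HS \<and> y \<in> HS \<and> x \<noteq> y}"
definition DR :: "nat set set" where "DR = {{x,y}|x y. x \<in> RS \<and> y \<in> RS \<and> x \<noteq> y}"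
definition DHQ :: "nat \<Rightarrow> nat set set" where "DHQ n = {{x,y}|x y. x \<in> HS \<and> y \<in> QS n}"

lemma Dp_eq:
  assumes r: "2 \<le> r" and n: "3 \<le> n"
  shows "Dpairs (VV r n N) (EE r n) (PP n) 2 = DH \<union> DR \<union> DHQ n"
proof
  show "Dpairs (VV r n N) (EE r n) (PP n) 2 \<subseteq> DH \<union> DR \<union> DHQ n"
  proof
    fix e assume "e \<in> Dpairs (VV r n N) (EE r n) (PP n) 2"
    then obtain x y where e: "e = {x,y}" "x \<in> PP n" "y \<in> PP n" "x \<noteq> y"
      "gdist (VV r n N) (EE r n) x y \<le> enat 2" unfolding Dpairs_def by auto
    hence c: "(x \<in> HS \<and> y \<in> HS) \<or> (x \<in> RS \<and> y \<in> RS) \<or> (x \<in> HS \<and> y \<in> QS n) \<or> (x \<in> QS n \<and> y \<in> HS)"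
      using gd_P r n by blast
    have "{x,y} = {y,x}" by auto
    thus "e \<in> DH \<union> DR \<union> DHQ n" using c e unfolding DH_def DR_def DHQ_def by blast
  qed
next
  show "DH \<union> DR \<union> DHQ n \<subseteq> Dpairs (VV r n N) (EE r n) (PP n) 2"
  proof
    fix e assume "e \<in> DH \<union> DR \<union> DHQ n"
    then obtain x y where e: "e = {x,y}" and
      c: "(x \<in> HS \<and> y \<in> HS \<and> x \<noteq> y) \<or> (x \<in> RS \<and> y \<in> RS \<and> x \<noteq> y) \<or> (x \<in> HS \<and> y \<in> QS n)"
      unfolding DH_def DR_def DHQ_def by blast
    have xy: "x \<noteq> y" using c HS_QS by blast
    have P: "x \<in> PP n" "y \<in> PP n" using c unfolding PP_def by blast+
    have "gdist (VV r n N) (EE r n) x y \<le> enat 2" using gd_P[OF P xy r n] c by blast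
    thus "e \<in> Dpairs (VV r n N) (EE r n) (PP n) 2" unfolding Dpairs_def using e P xy by blast
  qed
qed

lemma HS_eq: "HS = {8,16,24}"
  unfolding HS_def by (auto simp: image_def) presburger?

lemma RS_eq: "RS = {9,17,25}"
  unfolding RS_def Rv_def by (auto simp: image_def) presburger?

lemma mem_DH: "a \<in> HS \<Longrightarrow> b \<in> HS \<Longrightarrow> a \<noteq> b \<Longrightarrow> {a,b} \<in> DH" unfolding DH_def by blast
lemma mem_DR: "a \<in> RS \<Longrightarrow> b \<in> RS \<Longrightarrow> a \<noteq> b \<Longrightarrow> {a,b} \<in> DR" unfolding DR_def by blast

lemma DH_eq: "DH = {{8,16},{8,24},{16,24}}"
proof
  show "DH \<subseteq> {{8,16},{8,24},{16,24}}" unfolding DH_def HS_eq by auto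
  show "{{8,16},{8,24},{16,24}} \<subseteq> DH" using mem_DH unfolding HS_eq by simp
qed

lemma DR_eq: "DR = {{9,17},{9,25},{17,25}}"
proof
  show "DR \<subseteq> {{9,17},{9,25},{17,25}}" unfolding DR_def RS_eq by auto
  show "{{9,17},{9,25},{17,25}} \<subseteq> DR" using mem_DR unfolding RS_eq by simp
qed

lemma card_DH: "card DH = 3" unfolding DH_eq by (simp add: doubleton_eq_iff)
lemma card_DR: "card DR = 3" unfolding DR_eq by (simp add: doubleton_eq_iff)

lemma DHQ_eq: "DHQ n = (\<lambda>(a,c). {8*a, Qv c}) ` ({1..3} \<times> {4..n})"
  unfolding DHQ_def HS_def QS_def by auto

lemma card_DHQ: "card (DHQ n) = 3 * (n - 3)"
proof -
  have "inj_on (\<lambda>(a,c). {8*a, Qv c}) ({1..3} \<times> {4..n})"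
  proof (rule inj_onI, clarsimp)
    fix a c a' c' :: nat
    assume eq: "{8*a, Qv c} = {8*a', Qv c'}"
    have ne: "8*a \<noteq> Qv c'" "Qv c \<noteq> 8*a'" by (rule neq_by_mod, simp)+
    show "a = a' \<and> c = c'" using eq ne by (auto simp: doubleton_eq_iff)
  qed
  hence "card (DHQ n) = card ({1..3::nat} \<times> {4..n})" unfolding DHQ_eq by (rule card_image)
  also have "\<dots> = 3 * (n - 3)" by simp
  finally show ?thesis .
qed

lemma card_Dp:
  assumes r: "2 \<le> r" and n: "3 \<le> n"
  shows "card (Dpairs (VV r n N) (EE r n) (PP n) 2) = 3 * (n - 1)"
proof -
  have d1: "DH \<inter> DR = {}" unfolding DH_eq DR_eq by (auto simp: doubleton_eq_iff)
  have d2: "(DH \<union> DR) \<inter> DHQ n = {}"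
  proof -
    { fix e assume e1: "e \<in> DHQ n" and e2: "e \<in> DH \<union> DR"
      then obtain a c where "e = {8*a, Qv c}" unfolding DHQ_eq by auto
      hence "Qv c \<in> {8,16,24,9,17,25}" using e2 unfolding DH_eq DR_eq by auto
      hence False using Qv_mod[of c] by (auto simp del: Qv_mod) }
    thus ?thesis by blast
  qed
  have fin: "finite DH" "finite DR" "finite (DHQ n)" unfolding DH_eq DR_eq DHQ_eq by auto
  have "card (DH \<union> DR \<union> DHQ n) = card (DH \<union> DR) + card (DHQ n)"
    using fin d2 by (simp add: card_Un_disjoint)
  also have "card (DH \<union> DR) = 6" using fin d1 card_DH card_DR by (simp add: card_Un_disjoint)
  finally show ?thesis using Dp_eq[OF r n] card_DHQ n by simp
qed




lemma H_in: "1 \<le> a \<Longrightarrow> a \<le> 3 \<Longrightarrow> 8*a \<in> HS" unfolding HS_def by auto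
lemma R_in: "1 \<le> a \<Longrightarrow> a \<le> 3 \<Longrightarrow> Rv a \<in> RS" unfolding RS_def by auto

lemma arith:
  fixes x y tc ac t r k n m :: nat
  assumes "n + x \<le> (3*r+k+1) div 2" "x + tc = r + t" "y + ac = r" "y \<le> x" "tc \<le> n - 3" "ac \<le> t + 1"
    "n = r + k" "odd n" "3 \<le> n"
  shows False
proof -
  obtain q where q: "n = 2*q+1" using assms(8) oddE by blast
  have "3*r+k+1 = 2*(r+q+1)" using q assms(7) by simp
  hence "(3*r+k+1) div 2 = r+q+1" by simp
  thus False using assms q by linarith
qed

lemma noext:
  fixes r k n N :: nat and f :: "nat \<Rightarrow> nat"
  assumes r: "2 \<le> r" and nk: "n = r + k" and k: "1 \<le> k" and odd: "odd n"
    and prp: "proper_on (EE r n) (VV r n N) f"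
    and ext: "\<forall>v\<in>PP n. f v = v div 8"
    and cardf: "card (f ` VV r n N) \<le> (3*r+k+1) div 2"
  shows False
proof -
  define L where "L = r - 1"
  define V where "V = VV r n N"
  have n3: "3 \<le> n" using r k nk by simp
  have adjf: "\<And>x y. ed r n x y \<Longrightarrow> f x \<noteq> f y"
    using prp ed_V unfolding proper_on_def adj_EE by blast
  have fH: "\<And>a. 1 \<le> a \<Longrightarrow> a \<le> 3 \<Longrightarrow> f (8*a) = a"
    using ext H_in unfolding PP_def by auto
  have fR: "\<And>a. 1 \<le> a \<Longrightarrow> a \<le> 3 \<Longrightarrow> f (Rv a) = a"
    using ext R_in unfolding PP_def by auto
  have fQ: "\<And>c. 4 \<le> c \<Longrightarrow> c \<le> n \<Longrightarrow> f (Qv c) = c"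
    using ext Q_in unfolding PP_def by auto
  have Win: "\<And>j c. j < L \<Longrightarrow> 3 \<le> c \<Longrightarrow> c \<le> n \<Longrightarrow> Wv n j c \<in> WS r n"
    unfolding L_def by (rule W_in)
  have fa: "\<And>j c. j < L \<Longrightarrow> 3 \<le> c \<Longrightarrow> c \<le> n \<Longrightarrow> f (Wv n j c) \<notin> {1,2,3}"
  proof
    fix j c assume jc: "j < L" "3 \<le> c" "c \<le> n" and m: "f (Wv n j c) \<in> {1,2,3}"
    then obtain a where a: "1 \<le> a" "a \<le> 3" "f (Wv n j c) = a" by auto
    have "ed r n (8*a) (Wv n j c)" unfolding ed_def using H_in[OF a(1,2)] Win[OF jc] by blast
    thus False using adjf fH a by metis
  qed
  have fb: "f 3 \<notin> {1,2,3}"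
  proof
    assume "f 3 \<in> {1,2,3}"
    then obtain a where a: "1 \<le> a" "a \<le> 3" "f 3 = a" by auto
    have "ed r n (Rv a) 3" unfolding ed_def using R_in[OF a(1,2)] by blast
    thus False using adjf fR a by metis
  qed
  have fc: "\<And>j c. j < L \<Longrightarrow> 4 \<le> c \<Longrightarrow> c \<le> n \<Longrightarrow> f (Wv n j c) \<noteq> c"
  proof -
    fix j c assume jc: "j < L" "4 \<le> c" "c \<le> n"
    have "ed r n (Qv c) (Wv n j c)" using nbr_Q[OF jc(2,3)] jc(1) unfolding L_def by blast
    thus "f (Wv n j c) \<noteq> c" using adjf fQ[OF jc(2,3)] by metis
  qed
  have fd: "\<And>j c j' c'. j < L \<Longrightarrow> j' < L \<Longrightarrow> j \<noteq> j' \<Longrightarrow> 3 \<le> c \<Longrightarrow> c \<le> n \<Longrightarrow> 3 \<le> c' \<Longrightarrow> c' \<le> n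
      \<Longrightarrow> f (Wv n j c) \<noteq> f (Wv n j' c')"
  proof -
    fix j c j' c' assume h: "j < L" "j' < L" "j \<noteq> j'" "3 \<le> c" "c \<le> n" "3 \<le> c'" "c' \<le> n"
    have "ed r n (Wv n j c) (Wv n j' c')" unfolding ed_def using h unfolding L_def by blast
    thus "f (Wv n j c) \<noteq> f (Wv n j' c')" by (rule adjf)
  qed
  have fe: "\<And>j c. j < L \<Longrightarrow> 3 \<le> c \<Longrightarrow> c \<le> n \<Longrightarrow> f 3 \<noteq> f (Wv n j c)"
  proof -
    fix j c assume jc: "j < L" "3 \<le> c" "c \<le> n"
    have "ed r n 3 (Wv n j c)" unfolding ed_def using Win[OF jc] by blast
    thus "f 3 \<noteq> f (Wv n j c)" by (rule adjf)
  qed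
  define \<alpha> where "\<alpha> j = f (Wv n j 3)" for j
  define J where "J = {j. j < L \<and> 4 \<le> \<alpha> j \<and> \<alpha> j \<le> n}"
  define S where "S = (\<lambda>j. Wv n j 3) ` {..<L} \<union> {3}"
  define S2 where "S2 = (\<lambda>j. Wv n j (\<alpha> j)) ` J"
  have finJ: "finite J" unfolding J_def by auto
  have elems: "\<And>z. z \<in> S \<union> S2 \<Longrightarrow> z = 3 \<or> (\<exists>j c. j < L \<and> z = Wv n j c \<and> (c = 3 \<or> (j \<in> J \<and> c = \<alpha> j)))"
    unfolding S_def S2_def J_def by auto
  have Jprop: "\<And>j. j \<in> J \<Longrightarrow> j < L \<and> 4 \<le> \<alpha> j \<and> \<alpha> j \<le> n" unfolding J_def by auto
  have inj: "inj_on f (S \<union> S2)"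
  proof (rule inj_onI)
    fix z1 z2 assume z1: "z1 \<in> S \<union> S2" and z2: "z2 \<in> S \<union> S2" and eq: "f z1 = f z2"
    have gW: "\<And>j c. j < L \<Longrightarrow> (c = 3 \<or> (j \<in> J \<and> c = \<alpha> j)) \<Longrightarrow> 3 \<le> c \<and> c \<le> n"
      using Jprop n3 by fastforce
    show "z1 = z2"
    proof (cases "z1 = 3")
      case True
      show ?thesis
      proof (rule ccontr)
        assume "z1 \<noteq> z2"
        then obtain j c where "j < L" "z2 = Wv n j c" "c = 3 \<or> (j \<in> J \<and> c = \<alpha> j)"
          using elems[OF z2] True by blast
        thus False using fe gW eq True by metis
      qed
    next
      case False
      then obtain j c where jc: "j < L" "z1 = Wv n j c" "c = 3 \<or> (j \<in> J \<and> c = \<alpha> j)"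
        using elems[OF z1] by blast
      have c: "3 \<le> c" "c \<le> n" using gW[OF jc(1,3)] by auto
      show ?thesis
      proof (cases "z2 = 3")
        case True
        thus ?thesis using fe[OF jc(1) c] eq jc(2) by simp
      next
        case False
        then obtain j' c' where jc': "j' < L" "z2 = Wv n j' c'" "c' = 3 \<or> (j' \<in> J \<and> c' = \<alpha> j')"
          using elems[OF z2] by blast
        have c': "3 \<le> c'" "c' \<le> n" using gW[OF jc'(1,3)] by auto
        show ?thesis
        proof (cases "j = j'")
          case False
          thus ?thesis using fd[OF jc(1) jc'(1) False c c'] eq jc(2) jc'(2) by simp
        next
          case jj: True
          show ?thesis
          proof (cases "c = c'")
            case True thus ?thesis using jj jc jc' by simp
          next
            case False
            { assume "c = 3" "j' \<in> J" "c' = \<alpha> j'"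
              hence "f z1 = \<alpha> j" "f z2 \<noteq> \<alpha> j" using jc jc' jj fc[OF jc'(1)] Jprop \<alpha>_def by auto
              hence False using eq by simp }
            moreover
            { assume "c' = 3" "j \<in> J" "c = \<alpha> j"
              hence "f z2 = \<alpha> j" "f z1 \<noteq> \<alpha> j" using jc jc' jj fc[OF jc(1)] Jprop \<alpha>_def by auto
              hence False using eq by simp }
            ultimately show ?thesis using jc(3) jc'(3) False jj by blast
          qed
        qed
      qed
    qed
  qed
  have Wne3: "\<And>j c. Wv n j c \<noteq> 3" by simp
  have cardS: "card S = r"
  proof -
    have "inj_on (\<lambda>j. Wv n j 3) {..<L}" using n3 by (auto intro!: inj_onI simp: Wv_inj)
    hence "card ((\<lambda>j. Wv n j 3) ` {..<L}) = L" by (simp add: card_image)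
    moreover have "3 \<notin> (\<lambda>j. Wv n j 3) ` {..<L}" by auto
    ultimately show ?thesis unfolding S_def L_def using r by simp
  qed
  have cardS2: "card S2 = card J"
  proof -
    have "inj_on (\<lambda>j. Wv n j (\<alpha> j)) J" using Jprop by (auto intro!: inj_onI simp: Wv_inj)
    thus ?thesis unfolding S2_def by (rule card_image)
  qed
  have disj: "S \<inter> S2 = {}"
  proof -
    { fix z assume "z \<in> S" "z \<in> S2"
      then obtain j where j: "j \<in> J" "z = Wv n j (\<alpha> j)" unfolding S2_def by auto
      have "z \<noteq> 3" using j by simp
      then obtain i where "z = Wv n i 3" using \<open>z \<in> S\<close> unfolding S_def by auto
      hence "\<alpha> j = 3" using j Jprop n3 Wv_inj by metis
      hence False using Jprop[OF j(1)] by simp }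
    thus ?thesis by blast
  qed
  have finS: "finite S" "finite S2" unfolding S_def S2_def using finJ by auto
  define T where "T = f ` (S \<union> S2)"
  have cardT: "card T = r + card J"
    unfolding T_def using card_image[OF inj] card_Un_disjoint[OF finS disj] cardS cardS2 by simp
  define C where "C = {1..n}"
  have SV: "S \<union> S2 \<subseteq> V"
  proof
    fix z assume z: "z \<in> S \<union> S2"
    show "z \<in> V"
    proof (cases "z = 3")
      case True thus ?thesis using three_V unfolding V_def by simp
    next
      case False
      then obtain j c where jc: "j < L" "z = Wv n j c" "c = 3 \<or> (j \<in> J \<and> c = \<alpha> j)"
        using elems[OF z] by blast
      have "3 \<le> c \<and> c \<le> n" using jc(3) Jprop n3 by fastforce
      hence "z \<in> WS r n" using Win jc by simp
      thus ?thesis using WS_V unfolding V_def by blast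
    qed
  qed
  have CV: "C \<subseteq> f ` V"
  proof
    fix c assume "c \<in> C"
    hence c: "1 \<le> c" "c \<le> n" unfolding C_def by auto
    show "c \<in> f ` V"
    proof (cases "c \<le> 3")
      case True
      have "8*c \<in> V" using H_in[OF c(1) True] unfolding V_def VV_def by auto
      thus ?thesis using fH[OF c(1) True] by (metis image_eqI)
    next
      case False
      have "Qv c \<in> V" using Q_in[of c n] c False unfolding V_def VV_def by auto
      have c4: "4 \<le> c" using False by simp
      show ?thesis using fQ[OF c4 c(2)] \<open>Qv c \<in> V\<close> by (metis image_eqI)
    qed
  qed
  have TV: "T \<subseteq> f ` V" unfolding T_def using SV by auto
  have T123: "\<And>x. x \<in> T \<Longrightarrow> x \<notin> {1,2,3}"
  proof -
    fix x assume "x \<in> T"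
    then obtain z where z: "z \<in> S \<union> S2" "x = f z" unfolding T_def by auto
    have gW: "\<And>j c. j < L \<Longrightarrow> (c = 3 \<or> (j \<in> J \<and> c = \<alpha> j)) \<Longrightarrow> 3 \<le> c \<and> c \<le> n"
      using Jprop n3 by fastforce
    show "x \<notin> {1,2,3}"
    proof (cases "z = 3")
      case True thus ?thesis using fb z by simp
    next
      case False
      then obtain j c where jc: "j < L" "z = Wv n j c" "c = 3 \<or> (j \<in> J \<and> c = \<alpha> j)"
        using elems[OF z(1)] by blast
      have "3 \<le> c \<and> c \<le> n" using jc(3) Jprop n3 by fastforce
      thus ?thesis using fa[OF jc(1)] jc(2) z(2) by simp
    qed
  qed
  have TC: "T \<inter> C \<subseteq> {4..n}" using T123 unfolding C_def by fastforce
  have cardTC: "card (T \<inter> C) \<le> n - 3"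
    using card_mono[OF _ TC] by simp
  define A where "A = f ` S"
  have AT: "A \<subseteq> T" unfolding A_def T_def by auto
  have cardA: "card A = r"
    unfolding A_def using cardS card_image inj inj_on_subset by (metis Un_upper1)
  have AC: "A \<inter> C \<subseteq> \<alpha> ` J \<union> {f 3}"
  proof
    fix x assume x: "x \<in> A \<inter> C"
    then obtain z where z: "z \<in> S" "x = f z" unfolding A_def by auto
    show "x \<in> \<alpha> ` J \<union> {f 3}"
    proof (cases "z = 3")
      case True thus ?thesis using z by simp
    next
      case False
      then obtain j where j: "j < L" "z = Wv n j 3" using z unfolding S_def by auto
      have "x = \<alpha> j" using z j \<alpha>_def by simp
      moreover have "x \<notin> {1,2,3}" using T123 AT x by auto
      moreover have "x \<in> C" using x by simp
      ultimately have "j \<in> J" using j unfolding J_def C_def by auto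
      thus ?thesis using \<open>x = \<alpha> j\<close> by simp
    qed
  qed
  have cardAC: "card (A \<inter> C) \<le> card J + 1"
  proof -
    have "card (A \<inter> C) \<le> card (\<alpha> ` J \<union> {f 3})" using AC finJ by (intro card_mono) auto
    also have "\<dots> \<le> card (\<alpha> ` J) + card {f 3}" by (rule card_Un_le)
    also have "\<dots> \<le> card J + 1" using card_image_le[OF finJ, of \<alpha>] by simp
    finally show ?thesis .
  qed
  have finT: "finite T" unfolding T_def using finS by auto
  have finA: "finite A" using finT AT finite_subset by blast
  have sT: "card (T - C) + card (T \<inter> C) = card T"
    using card_Un_disjoint[of "T - C" "T \<inter> C"] finT by (metis Diff_Diff_Int Diff_disjoint Un_Diff_Int finite_Diff finite_Int inf_commute)
  have sA: "card (A - C) + card (A \<inter> C) = card A"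
    using card_Un_disjoint[of "A - C" "A \<inter> C"] finA by (metis Diff_Diff_Int Diff_disjoint Un_Diff_Int finite_Diff finite_Int inf_commute)
  have ATC: "card (A - C) \<le> card (T - C)" using AT finT by (intro card_mono) auto
  have finV: "finite (f ` V)" unfolding V_def VV_def WS_def HS_def RS_def QS_def XS_def by auto
  have "card (C \<union> (T - C)) = card C + card (T - C)"
    by (rule card_Un_disjoint) (auto simp: C_def intro: finite_subset[OF _ finT])
  also have "card C = n" unfolding C_def by simp
  finally have cCT: "card (C \<union> (T - C)) = n + card (T - C)" .
  have "card (C \<union> (T - C)) \<le> card (f ` V)" using CV TV finV by (intro card_mono) auto
  hence "n + card (T - C) \<le> (3*r+k+1) div 2" using cCT cardf unfolding V_def by simp
  moreover have e1: "card (T-C) + card (T\<inter>C) = r + card J" using sT cardT by simp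
  moreover have e2: "card (A-C) + card (A\<inter>C) = r" using sA cardA by simp
  ultimately show False using arith ATC cardTC cardAC nk odd n3 by blast
qed




lemma finite_VV: "finite (VV r n N)"
  unfolding VV_def WS_def HS_def RS_def QS_def XS_def by auto

lemma EE_prop: assumes "e \<in> EE r n" shows "e \<subseteq> VV r n N \<and> card e = 2"
proof -
  obtain x y where e: "e = {x,y}" "ed r n x y" using assms unfolding EE_def by auto
  have "x \<noteq> y" using e(2) by (rule ed_neq)
  thus ?thesis using e ed_V by auto
qed

lemma graph_VV: "graph (VV r n N) (EE r n)"
  unfolding graph_def using finite_VV EE_prop by blast

definition gcol :: "nat \<Rightarrow> nat \<Rightarrow> nat \<Rightarrow> nat" where
  "gcol r n v = (if v \<in> WS r n then (v div 8) div (n+1) else if v \<in> RS then 0 else r - 1)"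

lemma gcol_W: "j < r-1 \<Longrightarrow> 3 \<le> c \<Longrightarrow> c \<le> n \<Longrightarrow> gcol r n (Wv n j c) = j"
  unfolding gcol_def using W_in Wv_j by simp

lemma gcol_lt: "v \<in> WS r n \<Longrightarrow> gcol r n v < r - 1"
  unfolding WS_iff using gcol_W by auto

lemma gcol_R: "v \<in> RS \<Longrightarrow> gcol r n v = 0"
  unfolding gcol_def using RS_WS by auto

lemma gcol_other: "v \<notin> WS r n \<Longrightarrow> v \<notin> RS \<Longrightarrow> gcol r n v = r - 1"
  unfolding gcol_def by auto

lemma chrom: assumes r: "2 \<le> r" shows "chromatic_le (VV r n N) (EE r n) r"
  unfolding chromatic_le_def m_coloring_def
proof (intro exI conjI)
  show "proper_on (EE r n) (VV r n N) (gcol r n)"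
    unfolding proper_on_def adj_EE
  proof (intro ballI impI)
    fix x y assume "x \<in> VV r n N" "y \<in> VV r n N" and e: "ed r n x y"
    have 3: "3 \<notin> WS r n" "3 \<notin> RS" by (simp_all add: three_notin)
    have H: "\<And>z. z \<in> HS \<Longrightarrow> z \<notin> WS r n \<and> z \<notin> RS" using HS_WS HS_RS by blast
    have Q: "\<And>c. 4 \<le> c \<Longrightarrow> c \<le> n \<Longrightarrow> Qv c \<notin> WS r n \<and> Qv c \<notin> RS" using Q_in QS_WS RS_QS by blast
    show "gcol r n x \<noteq> gcol r n y"
      using e unfolding ed_def
    proof (elim disjE exE conjE)
      assume a: "x \<in> HS" "y \<in> WS r n"
      have "gcol r n x = r - 1" using H[OF a(1)] gcol_other by simp
      thus ?thesis using gcol_lt[OF a(2)] by simp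
    next
      assume a: "x \<in> WS r n" "y \<in> HS"
      have "gcol r n y = r - 1" using H[OF a(2)] gcol_other by simp
      thus ?thesis using gcol_lt[OF a(1)] by simp
    next
      fix j c assume h: "j < r-1" "4 \<le> c" "c \<le> n" "x = Qv c" "y = Wv n j c"
      have "gcol r n x = r - 1" using Q[OF h(2,3)] h(4) gcol_other by simp
      moreover have "gcol r n y = j" using gcol_W[OF h(1) _ h(3)] h(2,5) by simp
      ultimately show ?thesis using h(1) by simp
    next
      fix j c assume h: "j < r-1" "4 \<le> c" "c \<le> n" "y = Qv c" "x = Wv n j c"
      have "gcol r n y = r - 1" using Q[OF h(2,3)] h(4) gcol_other by simp
      moreover have "gcol r n x = j" using gcol_W[OF h(1) _ h(3)] h(2,5) by simp
      ultimately show ?thesis using h(1) by simp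
    next
      assume "x \<in> RS" "y = 3" thus ?thesis using gcol_R gcol_other 3 r by simp
    next
      assume "x = 3" "y \<in> RS" thus ?thesis using gcol_R gcol_other 3 r by simp
    next
      assume a: "x = 3" "y \<in> WS r n"
      have "gcol r n x = r - 1" using a(1) gcol_other 3 by simp
      thus ?thesis using gcol_lt[OF a(2)] by simp
    next
      assume a: "x \<in> WS r n" "y = 3"
      have "gcol r n y = r - 1" using a(2) gcol_other 3 by simp
      thus ?thesis using gcol_lt[OF a(1)] by simp
    next
      fix j c j' c' assume h: "j < r-1" "j' < r-1" "j \<noteq> j'" "3 \<le> c" "c \<le> n" "3 \<le> c'" "c' \<le> n"
        "x = Wv n j c" "y = Wv n j' c'"
      thus ?thesis using gcol_W by simp
    qed
  qed
  have "gcol r n ` VV r n N \<subseteq> {..<r}"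
  proof
    fix z assume "z \<in> gcol r n ` VV r n N"
    then obtain v where "z = gcol r n v" by auto
    thus "z \<in> {..<r}" using r gcol_lt[of v r n] unfolding gcol_def by (auto split: if_splits)
  qed
  thus "card (gcol r n ` VV r n N) \<le> r" using card_mono[of "{..<r}"] by fastforce
qed

lemma precol: assumes "3 \<le> n" shows "precoloring (EE r n) (PP n) n (\<lambda>v. v div 8)"
  unfolding precoloring_def proper_on_def adj_EE
proof (intro conjI ballI impI)
  fix x y assume "x \<in> PP n" "y \<in> PP n" "ed r n x y"
  thus "x div 8 \<noteq> y div 8" using notadj_P by blast
next
  show "(\<lambda>v. v div 8) ` PP n \<subseteq> {1..n}"
    unfolding PP_def HS_def RS_def QS_def using assms by auto
qed

lemma VV_split: "VV r n N = VV r n 0 \<union> XS N" unfolding VV_def XS_def by auto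

lemma card_VV: "card (VV r n N) = card (VV r n 0) + N"
proof -
  have d: "VV r n 0 \<inter> XS N = {}"
  proof -
    { fix x assume a: "x \<in> VV r n 0" "x \<in> XS N"
      have "XS 0 = {}" unfolding XS_def by simp
      hence "x \<in> HS \<or> x \<in> RS \<or> x \<in> QS n \<or> x \<in> WS r n \<or> x = 3" using a(1) unfolding VV_def by auto
      hence False using XS_notP[OF a(2)] by blast }
    thus ?thesis by blast
  qed
  have "card (XS N) = N" unfolding XS_def by (subst card_image) (auto intro: inj_onI)
  thus ?thesis using VV_split[of r n N] d finite_VV[of r n 0] card_Un_disjoint[of "VV r n 0" "XS N"]
    unfolding XS_def by auto
qed




definition trip :: "nat \<Rightarrow> nat \<Rightarrow> nat \<Rightarrow> triple" where
  "trip r n N = ((VV r n N, EE r n), PP n, (\<lambda>v. v div 8))"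

theorem theorem7:
  fixes r k :: nat
  assumes "r \<ge> 2" and "k \<ge> 1" and "odd (r + k)" and "k \<le> r"
  shows "\<exists>S :: triple set. infinite S
    \<and> (\<forall>t\<in>S. \<forall>t'\<in>S. t \<noteq> t' \<longrightarrow> \<not> triple_iso t t')
    \<and> (\<forall>((V, E), P, d) \<in> S.
          graph V E \<and> chromatic_le V E r
        \<and> P \<subseteq> V \<and> card (Dpairs V E P 2) = 3 * (r + k - 1)
        \<and> precoloring E P (r + k) d
        \<and> \<not> (\<exists>f. m_coloring V E ((3 * r + k + 1) div 2) f \<and> extends P d f))"
proof -
  define n where "n = r + k"
  have n3: "3 \<le> n" using assms unfolding n_def by simp
  have cardeq: "\<And>N N'. card (VV r n N) = card (VV r n N') \<Longrightarrow> N = N'"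
    using card_VV by (metis add_left_cancel)
  have inj: "inj (trip r n)"
  proof (rule injI)
    fix N N' assume "trip r n N = trip r n N'"
    hence "VV r n N = VV r n N'" unfolding trip_def by simp
    thus "N = N'" using cardeq by metis
  qed
  have inf: "infinite (range (trip r n))"
  proof
    assume "finite (range (trip r n))"
    hence "finite (UNIV :: nat set)" using finite_imageD inj by blast
    thus False by simp
  qed
  have noiso: "\<forall>t\<in>range (trip r n). \<forall>t'\<in>range (trip r n). t \<noteq> t' \<longrightarrow> \<not> triple_iso t t'"
  proof (intro ballI impI notI)
    fix t t' assume t: "t \<in> range (trip r n)" and t': "t' \<in> range (trip r n)" and ne: "t \<noteq> t'"
      and iso: "triple_iso t t'"
    obtain N where N: "t = trip r n N" using t by auto
    obtain N' where N': "t' = trip r n N'" using t' by auto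
    obtain h where "bij_betw h (VV r n N) (VV r n N')"
      using iso unfolding N N' trip_def triple_iso_def by auto
    hence "card (VV r n N) = card (VV r n N')" by (rule bij_betw_same_card)
    hence "N = N'" by (rule cardeq)
    thus False using ne N N' by simp
  qed
  have allN: "\<And>N. graph (VV r n N) (EE r n) \<and> chromatic_le (VV r n N) (EE r n) r
        \<and> PP n \<subseteq> VV r n N \<and> card (Dpairs (VV r n N) (EE r n) (PP n) 2) = 3 * (r + k - 1)
        \<and> precoloring (EE r n) (PP n) (r + k) (\<lambda>v. v div 8)
        \<and> \<not> (\<exists>f. m_coloring (VV r n N) (EE r n) ((3 * r + k + 1) div 2) f \<and> extends (PP n) (\<lambda>v. v div 8) f)"
  proof -
    fix N
    have g: "graph (VV r n N) (EE r n)" by (rule graph_VV)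
    have c: "chromatic_le (VV r n N) (EE r n) r" using assms(1) by (rule chrom)
    have p: "PP n \<subseteq> VV r n N" by (rule PP_V)
    have d: "card (Dpairs (VV r n N) (EE r n) (PP n) 2) = 3 * (r + k - 1)"
      using card_Dp[OF assms(1) n3] unfolding n_def by simp
    have pc: "precoloring (EE r n) (PP n) (r + k) (\<lambda>v. v div 8)"
      using precol[OF n3] unfolding n_def by simp
    have ne: "\<not> (\<exists>f. m_coloring (VV r n N) (EE r n) ((3 * r + k + 1) div 2) f \<and> extends (PP n) (\<lambda>v. v div 8) f)"
    proof
      assume "\<exists>f. m_coloring (VV r n N) (EE r n) ((3 * r + k + 1) div 2) f \<and> extends (PP n) (\<lambda>v. v div 8) f"
      then obtain f where f: "m_coloring (VV r n N) (EE r n) ((3 * r + k + 1) div 2) f"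
        "extends (PP n) (\<lambda>v. v div 8) f" by blast
      show False
        using noext[OF assms(1) n_def assms(2), of N f] assms(3) f
        unfolding m_coloring_def extends_def n_def by blast
    qed
    show "?thesis N" using g c p d pc ne by blast
  qed
  have props: "\<forall>((V, E), P, d) \<in> range (trip r n).
          graph V E \<and> chromatic_le V E r
        \<and> P \<subseteq> V \<and> card (Dpairs V E P 2) = 3 * (r + k - 1)
        \<and> precoloring E P (r + k) d
        \<and> \<not> (\<exists>f. m_coloring V E ((3 * r + k + 1) div 2) f \<and> extends P d f)"
    using allN by (auto simp: trip_def)
  show ?thesis using inf noiso props by blast
qed


end
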